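(* Let $\tau$ be a substitution over a finite alphabet $A$. Then $\overline\tau$ induces a well-defined map on the Besicovitch space (i.e. $\mathfrak d_H(x,y)=0$ implies $\mathfrak d_H(\overline\tau(x),\overline\tau(y))=0$ for all $x,y\in A^{\mathbb N}$) if and only if $\overline\tau$ is $1$-Lipschitz with respect to $\mathfrak d_H$, i.e. $\mathfrak d_H(\overline\tau(x),\overline\tau(y))\le\mathfrak d_H(x,y)$ for all $x,y\in A^{\mathbb N}$.
   Context: A substitution is a nonerasing monoid morphism $\tau:A^*\to A^*$ (so $\tau(a)$ is a nonempty word for each letter $a$), and $\overline\tau:A^{\mathbb N}\to A^{\mathbb N}$ is $\overline\tau(z)=\tau(z_0)\tau(z_1)\tau(z_2)\cdots$. For words $u,v$ of equal length, $d_H(u,v)$ is the number of positions where they differ; the Besicovitch pseudo-metric is $\mathfrak d_H(x,y)=\limsup_{l\to\infty}\frac{d_H(x_{[0,l)},y_{[0,l)})}{l}$, where $x_{[0,l)}=x_0\cdots x_{l-1}$. *)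

theory Defs
  imports "HOL-Analysis.Analysis" "HOL-Library.Stream"
begin

definition substitution :: "('a \<Rightarrow> 'a list) \<Rightarrow> bool" where
  "substitution \<tau> \<longleftrightarrow> (\<forall>a. \<tau> a \<noteq> [])"

definition subst_ext :: "('a \<Rightarrow> 'a list) \<Rightarrow> 'a stream \<Rightarrow> 'a stream" where
  "subst_ext \<tau> z = flat (smap \<tau> z)"

definition hamming :: "'a list \<Rightarrow> 'a list \<Rightarrow> nat" where
  "hamming u v = card {i. i < length u \<and> u ! i \<noteq> v ! i}"

definition besicovitch :: "'a stream \<Rightarrow> 'a stream \<Rightarrow> ereal" where
  "besicovitch x y =
     limsup (\<lambda>l. ereal (real (hamming (stake l x) (stake l y)) / real l))"

end

theory Submission imports Defs begin

lemma subst_cons: "substitution \<tau> \<Longrightarrow> subst_ext \<tau> (a ## z) = \<tau> a @- subst_ext \<tau> z"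
  by (simp add: subst_ext_def substitution_def)

lemma subst_shift: "substitution \<tau> \<Longrightarrow> subst_ext \<tau> (w @- z) = concat (map \<tau> w) @- subst_ext \<tau> z"
  by (induction w) (simp_all add: subst_cons)

lemma subst_cycle: "substitution \<tau> \<Longrightarrow> w \<noteq> [] \<Longrightarrow>
   subst_ext \<tau> (cycle w) = concat (map \<tau> w) @- subst_ext \<tau> (cycle w)"
  by (metis cycle_decomp subst_shift)

lemma hamming_stake: "hamming (stake l X) (stake l Y) = card {i. i < l \<and> X !! i \<noteq> Y !! i}"
  unfolding hamming_def by (intro arg_cong[where f=card]) (auto simp: stake_nth)

lemma period_mult: "S = u @- S \<Longrightarrow> S !! (i + k * length u) = S !! i"
proof (induction k)
  case (Suc k)
  have "S !! (i + Suc k * length u) = (u @- S) !! (length u + (i + k * length u))"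
    using Suc.prems by (simp add: algebra_simps)
  also have "\<dots> = S !! (i + k * length u)" by simp
  finally show ?case using Suc by simp
qed simp

lemma periodD_mult: "(\<forall>i. S !! (i + D) = S !! i) \<Longrightarrow> S !! (i + k * D) = S !! i"
  by (induction k) (simp_all add: add.assoc[symmetric] add.commute[of D])

lemma periodD_mod: "(\<forall>i. S !! (i + D) = S !! i) \<Longrightarrow> S !! i = S !! (i mod D)"
  using periodD_mult[of S D "i mod D" "i div D"] by simp

lemma besic_nonneg: "0 \<le> besicovitch x y"
  unfolding besicovitch_def by (rule le_Limsup) auto

lemma besic_self: "besicovitch x x = 0"
  unfolding besicovitch_def hamming_stake by (simp add: Limsup_const)

lemma besic_one: "besicovitch (a ## z) (b ## z) = 0"
proof -
  have le: "hamming (stake l (a ## z)) (stake l (b ## z)) \<le> 1" for l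
  proof -
    have "{i. i < l \<and> (a ## z) !! i \<noteq> (b ## z) !! i} \<subseteq> {0}"
      by (clarsimp, case_tac x, auto)
    then show ?thesis unfolding hamming_stake using card_mono[of "{0::nat}"] by fastforce
  qed
  have "besicovitch (a ## z) (b ## z) \<le> limsup (\<lambda>l. ereal (1 / real l))"
    unfolding besicovitch_def
  proof (intro Limsup_mono always_eventually allI)
    fix l :: nat
    have "real (hamming (stake l (a ## z)) (stake l (b ## z))) \<le> 1" using le[of l] by simp
    then show "ereal (real (hamming (stake l (a ## z)) (stake l (b ## z))) / real l) \<le> ereal (1 / real l)"
      by (simp add: divide_right_mono)
  qed
  also have "\<dots> = 0"
    unfolding zero_ereal_def
    by (rule lim_imp_Limsup) (simp_all add: tendsto_ereal lim_const_over_n)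
  finally show ?thesis using besic_nonneg[of "a ## z" "b ## z"] by simp
qed

lemma shift_period:
  assumes Z: "Z = u @- Z" and u: "u \<noteq> []" and pq: "length p < length q"
    and B: "besicovitch (p @- Z) (q @- Z) = 0"
  shows "Z !! (i + (length q - length p)) = Z !! i"
proof (rule ccontr)
  define D where "D = length q - length p"
  define P where "P = length u"
  define c where "c = length q + i"
  have P0: "P > 0" using u P_def by simp
  assume ne: "Z !! (i + (length q - length p)) \<noteq> Z !! i"
  have mis: "(p @- Z) !! (c + k*P) \<noteq> (q @- Z) !! (c + k*P)" for k
  proof -
    have "(p @- Z) !! (c + k*P) = Z !! ((i + D) + k*P)" using pq
      by (simp add: c_def D_def algebra_simps)
    also have "\<dots> = Z !! (i+D)" using period_mult[OF Z] P_def by simp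
    finally have 1: "(p @- Z) !! (c + k*P) = Z !! (i+D)" .
    have "(q @- Z) !! (c + k*P) = Z !! (i + k*P)" by (simp add: c_def algebra_simps)
    also have "\<dots> = Z !! i" using period_mult[OF Z] P_def by simp
    finally show ?thesis using 1 ne D_def by simp
  qed
  have H: "Suc m \<le> hamming (stake (Suc m*(c+P)) (p@-Z)) (stake (Suc m*(c+P)) (q@-Z))" for m
  proof -
    have sub: "(\<lambda>k. c + k*P) ` {..<Suc m} \<subseteq> {j. j < Suc m*(c+P) \<and> (p @- Z) !! j \<noteq> (q @- Z) !! j}"
    proof safe
      fix k assume "k < Suc m"
      then have "k * P \<le> m * P" by simp
      moreover have "Suc m * (c+P) = c + P + m * P + m * c" by (simp add: algebra_simps)
      ultimately show "c + k*P < Suc m * (c+P)" using P0 by linarith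
    qed (use mis in auto)
    have inj: "inj_on (\<lambda>k. c + k*P) {..<Suc m}" using P0 by (auto simp: inj_on_def)
    have "Suc m = card ((\<lambda>k. c + k*P) ` {..<Suc m})" using card_image[OF inj] by simp
    also have "\<dots> \<le> card {j. j < Suc m*(c+P) \<and> (p @- Z) !! j \<noteq> (q @- Z) !! j}"
      by (rule card_mono[OF _ sub]) simp
    finally show ?thesis unfolding hamming_stake .
  qed
  define f where "f l = ereal (real (hamming (stake l (p @- Z)) (stake l (q @- Z))) / real l)" for l
  define r where "r m = Suc m * (c+P)" for m
  have sm: "strict_mono r" unfolding r_def strict_mono_def using P0 by simp
  have "ereal (1 / real (c+P)) \<le> limsup (f \<circ> r)"
  proof (rule le_Limsup, simp, rule always_eventually, rule allI)
    fix m
    have "real (Suc m) \<le> real (hamming (stake (Suc m*(c+P)) (p@-Z)) (stake (Suc m*(c+P)) (q@-Z)))"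
      using H[of m] by linarith
    then have "real (Suc m) / real (Suc m * (c+P)) \<le> real (hamming (stake (Suc m*(c+P)) (p@-Z)) (stake (Suc m*(c+P)) (q@-Z))) / real (Suc m * (c+P))"
      by (simp add: divide_right_mono)
    moreover have "real (Suc m) / real (Suc m * (c+P)) = 1 / real (c+P)"
    proof -
      have "real (c+P) > 0" using P0 by simp
      moreover have "real (Suc m) > 0" by simp
      ultimately show ?thesis by (simp only: of_nat_mult) (simp add: field_simps del: of_nat_Suc of_nat_add)
    qed
    ultimately show "ereal (1 / real (c+P)) \<le> (f \<circ> r) m"
      by (simp add: f_def r_def)
  qed
  also have "\<dots> \<le> limsup f" by (rule limsup_subseq_mono[OF sm])
  also have "\<dots> = 0" using B unfolding besicovitch_def f_def by simp
  finally show False using P0 by simp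
qed

lemma stream_eqI_snth: "(\<And>i. s !! i = t !! i) \<Longrightarrow> s = t"
  by (metis stream_smap_nats ext)

lemma rep_shift: "S = u @- S \<Longrightarrow> S = concat (replicate n u) @- S"
  by (induction n) (simp_all add: shift_append[symmetric])

lemma all_equal:
  assumes sub: "substitution \<tau>"
    and WD: "\<forall>x y. besicovitch x y = 0 \<longrightarrow> besicovitch (subst_ext \<tau> x) (subst_ext \<tau> y) = 0"
    and ab: "length (\<tau> a) < length (\<tau> b)"
  shows "subst_ext \<tau> x = subst_ext \<tau> y"
proof -
  define D where "D = length (\<tau> b) - length (\<tau> a)"
  have D0: "D > 0" using ab D_def by simp
  define Zw where "Zw w = subst_ext \<tau> (cycle w)" for w
  have Zdec: "Zw w = concat (map \<tau> w) @- Zw w" if "w \<noteq> []" for w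
    using subst_cycle[OF sub that] Zw_def by simp
  have per: "\<forall>i. Zw w !! (i + D) = Zw w !! i" if w: "w \<noteq> []" for w
  proof
    fix i
    have ne: "concat (map \<tau> w) \<noteq> []" using w sub unfolding substitution_def
      by (cases w) auto
    have "besicovitch (subst_ext \<tau> (a ## cycle w)) (subst_ext \<tau> (b ## cycle w)) = 0"
      using WD besic_one[of a "cycle w" b] by blast
    then have B: "besicovitch (\<tau> a @- Zw w) (\<tau> b @- Zw w) = 0"
      by (simp add: subst_cons[OF sub] Zw_def)
    show "Zw w !! (i + D) = Zw w !! i"
      using shift_period[OF Zdec[OF w] ne ab B] D_def by simp
  qed
  have Zsing: "Zw [c] = \<tau> c @- Zw [c]" for c using Zdec[of "[c]"] by simp
  have key: "Zw [e] = Zw [c]" for c e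
  proof -
    define p where "p = length (\<tau> c)"
    define q where "q = length (\<tau> e)"
    have p0: "p > 0" and q0: "q > 0" using sub unfolding substitution_def p_def q_def by auto
    define w where "w = replicate D c @ replicate D e"
    have wne: "w \<noteq> []" using D0 w_def by simp
    define W where "W = Zw w"
    define pc where "pc = concat (replicate D (\<tau> c))"
    define pe where "pe = concat (replicate D (\<tau> e))"
    have lpc: "length pc = D * p" unfolding pc_def p_def by (simp add: length_concat sum_list_replicate)
    have lpe: "length pe = D * q" unfolding pe_def q_def by (simp add: length_concat sum_list_replicate)
    have "concat (map \<tau> w) = pc @ pe"
      unfolding w_def pc_def pe_def by (simp add: map_replicate_const)
    then have Wdec: "W = pc @- (pe @- W)" using Zdec[OF wne] W_def by (simp add: shift_append)
    have Vdec: "Zw [c] = pc @- Zw [c]" unfolding pc_def by (rule rep_shift[OF Zsing])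
    have Edec: "Zw [e] = pe @- Zw [e]" unfolding pe_def by (rule rep_shift[OF Zsing])
    have Wper: "\<forall>i. W !! (i + D) = W !! i" using per[OF wne] W_def by simp
    have Vper: "\<forall>i. Zw [c] !! (i + D) = Zw [c] !! i" using per[of "[c]"] by simp
    have Eper: "\<forall>i. Zw [e] !! (i + D) = Zw [e] !! i" using per[of "[e]"] by simp
    have small: "Zw [e] !! i = Zw [c] !! i" if i: "i < D" for i
    proof -
      have iD1: "i < D * p" "i < D * q" using i p0 q0 less_le_trans[OF i, of "D * _"] by simp_all
      have "Zw [e] !! i = pe ! i" using iD1 lpe by (subst Edec) simp
      also have "\<dots> = W !! (D * p + i)" using iD1 lpe lpc by (subst Wdec) simp
      also have "\<dots> = W !! (i + p * D)" by (simp add: algebra_simps)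
      also have "\<dots> = W !! i" by (rule periodD_mult[OF Wper])
      also have "\<dots> = pc ! i" using iD1 lpc by (subst Wdec) simp
      also have "\<dots> = Zw [c] !! i" using iD1 lpc shift_snth_less[of i pc "Zw [c]"] Vdec by metis
      finally show ?thesis .
    qed
    show ?thesis
    proof (rule stream_eqI_snth)
      fix i
      have "Zw [e] !! i = Zw [e] !! (i mod D)" by (rule periodD_mod[OF Eper])
      also have "\<dots> = Zw [c] !! (i mod D)" using small D0 by simp
      also have "\<dots> = Zw [c] !! i" by (rule periodD_mod[OF Vper, symmetric])
      finally show "Zw [e] !! i = Zw [c] !! i" .
    qed
  qed
  define V where "V = Zw [a]"
  have Vfix: "\<tau> e @- V = V" for e using Zsing[of e] key[of e a] V_def by simp
  have all: "subst_ext \<tau> z !! i = V !! i" for z i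
  proof (induction i arbitrary: z rule: less_induct)
    case (less i)
    have zd: "subst_ext \<tau> z = \<tau> (shd z) @- subst_ext \<tau> (stl z)"
      using subst_cons[OF sub, of "shd z" "stl z"] by simp
    have l0: "length (\<tau> (shd z)) > 0" using sub unfolding substitution_def by simp
    show ?case
    proof (cases "i < length (\<tau> (shd z))")
      case True
      then show ?thesis using zd shift_snth_less[OF True] Vfix[of "shd z"] by metis
    next
      case False
      then have lt: "i - length (\<tau> (shd z)) < i" using l0 by linarith
      have "subst_ext \<tau> z !! i = V !! (i - length (\<tau> (shd z)))"
        using False lt zd less.IH[of "i - length (\<tau> (shd z))" "stl z"] l0 by simp
      also have "\<dots> = V !! i" using False shift_snth_ge[of "\<tau> (shd z)" i V] Vfix[of "shd z"] by simp
      finally show ?thesis .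
    qed
  qed
  show ?thesis by (rule stream_eqI_snth) (simp add: all)
qed

lemma len_concat_const: "(\<forall>a. length (\<tau> a) = L) \<Longrightarrow> length (concat (map \<tau> xs)) = length xs * L"
  by (induction xs) auto

lemma const_snth:
  assumes sub: "substitution \<tau>" and L: "\<forall>a. length (\<tau> a) = L" and r: "r < L"
  shows "subst_ext \<tau> x !! (n*L + r) = \<tau> (x !! n) ! r"
proof -
  have "subst_ext \<tau> x = concat (map \<tau> (stake n x)) @- subst_ext \<tau> (sdrop n x)"
    using subst_shift[OF sub, of "stake n x" "sdrop n x"] by (simp add: stake_sdrop)
  moreover have "length (concat (map \<tau> (stake n x))) = n * L" using len_concat_const[OF L] by simp
  moreover have "subst_ext \<tau> (sdrop n x) = \<tau> (x !! n) @- subst_ext \<tau> (sdrop (Suc n) x)"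
    using subst_cons[OF sub, of "x !! n" "sdrop (Suc n) x"]
    by (metis sdrop_simps(1) sdrop_simps(2) sdrop_stl stream.collapse)
  ultimately show ?thesis using r L by simp
qed

lemma ham_bound:
  assumes sub: "substitution \<tau>" and L: "\<forall>a. length (\<tau> a) = L" and lk: "l \<le> k * L"
  shows "card {j. j < l \<and> subst_ext \<tau> x !! j \<noteq> subst_ext \<tau> y !! j}
         \<le> L * card {n. n < k \<and> x !! n \<noteq> y !! n}"
proof -
  have L0: "L > 0" using sub L unfolding substitution_def by (metis length_greater_0_conv)
  have sub1: "{j. j < l \<and> subst_ext \<tau> x !! j \<noteq> subst_ext \<tau> y !! j}
     \<subseteq> (\<lambda>(n,r). n*L+r) ` ({n. n < k \<and> x !! n \<noteq> y !! n} \<times> {..<L})"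
  proof safe
    fix j assume j: "j < l" and ne: "subst_ext \<tau> x !! j \<noteq> subst_ext \<tau> y !! j"
    have jd: "j = (j div L) * L + j mod L" by simp
    have rm: "j mod L < L" using L0 by simp
    have "j div L < k" using j lk L0
      by (metis div_less_iff_less_mult less_le_trans)
    moreover have "x !! (j div L) \<noteq> y !! (j div L)"
      using ne const_snth[OF sub L rm, of x "j div L"] const_snth[OF sub L rm, of y "j div L"] jd by metis
    ultimately show "j \<in> (\<lambda>(n,r). n*L+r) ` ({n. n < k \<and> x !! n \<noteq> y !! n} \<times> {..<L})"
      using rm jd by (intro image_eqI[of _ _ "(j div L, j mod L)"]) auto
  qed
  have "card {j. j < l \<and> subst_ext \<tau> x !! j \<noteq> subst_ext \<tau> y !! j}
     \<le> card ((\<lambda>(n,r). n*L+r) ` ({n. n < k \<and> x !! n \<noteq> y !! n} \<times> {..<L}))"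
    by (rule card_mono[OF _ sub1]) auto
  also have "\<dots> \<le> card ({n. n < k \<and> x !! n \<noteq> y !! n} \<times> {..<L})" by (rule card_image_le) auto
  also have "\<dots> = L * card {n. n < k \<and> x !! n \<noteq> y !! n}" by (simp add: card_cartesian_product)
  finally show ?thesis .
qed

lemma const_lip:
  assumes sub: "substitution \<tau>" and L: "\<forall>a. length (\<tau> a) = L"
  shows "besicovitch (subst_ext \<tau> x) (subst_ext \<tau> y) \<le> besicovitch x y"
proof -
  have L0: "L > 0" using sub L unfolding substitution_def by (metis length_greater_0_conv)
  define H where "H l = card {n. n < l \<and> x !! n \<noteq> y !! n}" for l
  define G where "G l = card {j. j < l \<and> subst_ext \<tau> x !! j \<noteq> subst_ext \<tau> y !! j}" for l
  define f where "f l = real (H l) / real l" for l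
  define g where "g l = real (G l) / real l" for l
  define kk where "kk l = l div L + 1" for l
  have Hle: "H k \<le> k" for k
  proof -
    have "H k \<le> card {..<k}" unfolding H_def by (rule card_mono) auto
    then show ?thesis by simp
  qed
  have gf: "g l \<le> f (kk l) + real L / real l" if l0: "l > 0" for l
  proof -
    define k where "k = kk l"
    have e1: "l = l div L * L + l mod L" by simp
    have e2: "l mod L < L" using L0 by simp
    have e3: "k * L = l div L * L + L" unfolding k_def kk_def by (simp add: algebra_simps)
    have lk: "l \<le> k * L" and kl: "k * L \<le> l + L" using e1 e2 e3 by linarith+
    have k0: "k > 0" unfolding k_def kk_def by simp
    have G: "G l \<le> L * H k" using ham_bound[OF sub L lk] unfolding G_def H_def .
    have nat1: "L * H k * k \<le> H k * l + L * k"
    proof -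
      have "L * H k * k = H k * (k * L)" by (simp add: algebra_simps)
      also have "\<dots> \<le> H k * (l + L)" using kl by simp
      also have "\<dots> = H k * l + H k * L" by (simp add: algebra_simps)
      also have "\<dots> \<le> H k * l + k * L" using Hle[of k] by simp
      finally show ?thesis by (simp add: algebra_simps)
    qed
    have r1: "real (L * H k * k) \<le> real (H k * l + L * k)" using nat1 by linarith
    have "g l \<le> real (L * H k) / real l" unfolding g_def using G l0
      by (simp add: divide_right_mono del: of_nat_mult)
    also have "\<dots> = real (L * H k * k) / (real l * real k)" using k0 by simp
    also have "\<dots> \<le> real (H k * l + L * k) / (real l * real k)"
      using r1 k0 l0 by (simp add: divide_right_mono del: of_nat_mult of_nat_add)
    also have "\<dots> = f k + real L / real l" unfolding f_def using k0 l0 by (simp add: field_simps)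
    finally show ?thesis unfolding k_def .
  qed
  have Bx: "besicovitch x y = limsup (\<lambda>l. ereal (f l))"
    unfolding besicovitch_def f_def H_def hamming_stake ..
  have Bt: "besicovitch (subst_ext \<tau> x) (subst_ext \<tau> y) = limsup (\<lambda>l. ereal (g l))"
    unfolding besicovitch_def g_def G_def hamming_stake ..
  have nn: "0 \<le> limsup (\<lambda>l. ereal (f l))" using besic_nonneg Bx by metis
  show ?thesis unfolding Bx Bt Limsup_le_iff
  proof (intro allI impI)
    fix Y assume Y: "limsup (\<lambda>l. ereal (f l)) < Y"
    show "\<forall>\<^sub>F l in sequentially. ereal (g l) < Y"
    proof (cases Y)
      case PInf then show ?thesis by simp
    next
      case MInf then show ?thesis using Y by simp
    next
      case (real y)
      obtain z where z1: "limsup (\<lambda>l. ereal (f l)) < z" and z2: "z < Y" using dense[OF Y] by blast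
      obtain zr where zr: "z = ereal zr" using z1 z2 nn real by (cases z) auto
      have zy: "zr < y" using z2 zr real by simp
      have "\<forall>\<^sub>F k in sequentially. ereal (f k) < z" by (rule Limsup_lessD[OF z1])
      then obtain N where N: "\<And>k. k \<ge> N \<Longrightarrow> f k < zr" unfolding eventually_sequentially zr by auto
      have "(\<lambda>l. real L / real l) \<longlonglongrightarrow> 0" by (rule lim_const_over_n)
      then have ev1: "\<forall>\<^sub>F l in sequentially. real L / real l < y - zr" using zy by (simp add: order_tendstoD(2))
      have ev2: "\<forall>\<^sub>F l in sequentially. l \<ge> N * L + 1" by (rule eventually_ge_at_top)
      show ?thesis using ev1 ev2
      proof eventually_elim
        case (elim l)
        then have l0: "l > 0" by simp
        have "N * L \<le> l" using elim by simp
        then have "N \<le> l div L" using L0 div_le_mono[of "N * L" l L] by simp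
        then have "f (kk l) < zr" using N unfolding kk_def by simp
        then have "g l < y" using gf[OF l0] elim by simp
        then show ?case using real by simp
      qed
    qed
  qed
qed

theorem mainTheorem4:
  fixes \<tau> :: "'a::finite \<Rightarrow> 'a list"
  assumes "substitution \<tau>"
  shows "(\<forall>x y. besicovitch x y = 0 \<longrightarrow>
            besicovitch (subst_ext \<tau> x) (subst_ext \<tau> y) = 0)
         \<longleftrightarrow>
         (\<forall>x y. besicovitch (subst_ext \<tau> x) (subst_ext \<tau> y) \<le> besicovitch x y)"
proof
  assume WD: "\<forall>x y. besicovitch x y = 0 \<longrightarrow> besicovitch (subst_ext \<tau> x) (subst_ext \<tau> y) = 0"
  show "\<forall>x y. besicovitch (subst_ext \<tau> x) (subst_ext \<tau> y) \<le> besicovitch x y"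
  proof (cases "\<exists>a b. length (\<tau> a) < length (\<tau> b)")
    case True
    then obtain a b where ab: "length (\<tau> a) < length (\<tau> b)" by blast
    show ?thesis
    proof (intro allI)
      fix x y
      have "subst_ext \<tau> x = subst_ext \<tau> y" by (rule all_equal[OF assms WD ab])
      then show "besicovitch (subst_ext \<tau> x) (subst_ext \<tau> y) \<le> besicovitch x y"
        using besic_self besic_nonneg by metis
    qed
  next
    case False
    then have "\<forall>a. length (\<tau> a) = length (\<tau> undefined)" by (metis linorder_neqE_nat)
    then show ?thesis using const_lip[OF assms] by blast
  qed
next
  assume "\<forall>x y. besicovitch (subst_ext \<tau> x) (subst_ext \<tau> y) \<le> besicovitch x y"
  then show "\<forall>x y. besicovitch x y = 0 \<longrightarrow> besicovitch (subst_ext \<tau> x) (subst_ext \<tau> y) = 0"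
    using besic_nonneg by (metis order.antisym)
qed

end
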